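(* Let $X$ be a finite connected poset, $\theta\in\mathcal{M}(X)$, and let $C:x_1<\dots<x_n$ and $D:y_1<\dots<y_m$ be maximal chains of $X$. Assume $x_i=y_j$ for some $1<i<n$ and $1<j<m$. If $\theta$ is increasing (resp. decreasing) on $C$, then it is increasing (resp. decreasing) on $D$. Moreover, if $\theta(C):u_1<\dots<u_n$ and $\theta(D):v_1<\dots<v_m$, then $u_i=v_j$ (resp. $u_{n-i+1}=v_{m-j+1}$).
   Context: For $x<y$, $e_{xy}$ denotes the incidence-algebra basis element and $B=\{e_{xy}:x<y\}$. For a bijection $\theta:B\to B$ and a maximal chain $C:u_1<\dots<u_k$, $\theta$ is increasing on $C$ if there is a maximal chain $D':v_1<\dots<v_k$ with $\theta(e_{u_pu_q})=e_{v_pv_q}$ for all $p<q$, and decreasing if there is such $D'$ with $\theta(e_{u_pu_q})=e_{v_{k-q+1}v_{k-p+1}}$ for all $p<q$; in either case $\theta(C)$ denotes $D'$. $\mathcal{M}(X)$ is the set of bijections $B\to B$ increasing or decreasing on every maximal chain. *)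

theory Defs
  imports Main
begin

text \<open>A poset X is modelled as a finite carrier set X of a type with a partial order.
  The basis B of the incidence algebra is modelled by pairs (x,y) with x<y in X,
  standing for e_xy.\<close>

definition basis :: "'a::order set \<Rightarrow> ('a \<times> 'a) set" where
  "basis X = {(x, y). x \<in> X \<and> y \<in> X \<and> x < y}"

definition connected_poset :: "'a::order set \<Rightarrow> bool" where
  "connected_poset X \<longleftrightarrow> X \<noteq> {} \<and>
     (\<forall>x\<in>X. \<forall>y\<in>X. (\<lambda>a b. a \<in> X \<and> b \<in> X \<and> (a \<le> b \<or> b \<le> a))\<^sup>*\<^sup>* x y)"

definition maximal_chain :: "'a::order set \<Rightarrow> 'a list \<Rightarrow> bool" where
  "maximal_chain X cs \<longleftrightarrow> cs \<noteq> [] \<and> sorted_wrt (<) cs \<and> set cs \<subseteq> X \<and>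
     (\<forall>z\<in>X. (\<forall>c\<in>set cs. c \<le> z \<or> z \<le> c) \<longrightarrow> z \<in> set cs)"

text \<open>D is a witness that theta is increasing on C (indices 0-based).\<close>
definition increasing_wit :: "'a::order set \<Rightarrow> ('a \<times> 'a \<Rightarrow> 'a \<times> 'a) \<Rightarrow> 'a list \<Rightarrow> 'a list \<Rightarrow> bool" where
  "increasing_wit X \<theta> C D \<longleftrightarrow> maximal_chain X D \<and> length D = length C \<and>
     (\<forall>p q. p < q \<and> q < length C \<longrightarrow> \<theta> (C ! p, C ! q) = (D ! p, D ! q))"

definition decreasing_wit :: "'a::order set \<Rightarrow> ('a \<times> 'a \<Rightarrow> 'a \<times> 'a) \<Rightarrow> 'a list \<Rightarrow> 'a list \<Rightarrow> bool" where
  "decreasing_wit X \<theta> C D \<longleftrightarrow> maximal_chain X D \<and> length D = length C \<and>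
     (\<forall>p q. p < q \<and> q < length C \<longrightarrow>
        \<theta> (C ! p, C ! q) = (D ! (length C - 1 - q), D ! (length C - 1 - p)))"

definition increasing_on :: "'a::order set \<Rightarrow> ('a \<times> 'a \<Rightarrow> 'a \<times> 'a) \<Rightarrow> 'a list \<Rightarrow> bool" where
  "increasing_on X \<theta> C \<longleftrightarrow> (\<exists>D. increasing_wit X \<theta> C D)"

definition decreasing_on :: "'a::order set \<Rightarrow> ('a \<times> 'a \<Rightarrow> 'a \<times> 'a) \<Rightarrow> 'a list \<Rightarrow> bool" where
  "decreasing_on X \<theta> C \<longleftrightarrow> (\<exists>D. decreasing_wit X \<theta> C D)"

text \<open>The set M(X). Bijections are considered as maps on B; values outside B are irrelevant.\<close>
definition M_set :: "'a::order set \<Rightarrow> ('a \<times> 'a \<Rightarrow> 'a \<times> 'a) set" where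
  "M_set X = {\<theta>. bij_betw \<theta> (basis X) (basis X) \<and>
     (\<forall>C. maximal_chain X C \<longrightarrow> increasing_on X \<theta> C \<or> decreasing_on X \<theta> C)}"

end

theory Submission
  imports Defs
begin

lemma mc_sorted: "maximal_chain X V \<Longrightarrow> p < q \<Longrightarrow> q < length V \<Longrightarrow> V ! p < V ! q"
  unfolding maximal_chain_def by (auto simp: sorted_wrt_iff_nth_less)

lemma mc_in: "maximal_chain X V \<Longrightarrow> p < length V \<Longrightarrow> V ! p \<in> X"
  unfolding maximal_chain_def by (auto)

lemma mc_last_max:
  assumes "maximal_chain X V" "z \<in> X" "V ! (length V - 1) < z"
  shows False
proof -
  have ne: "V \<noteq> []" using assms(1) unfolding maximal_chain_def by auto
  have "\<forall>c\<in>set V. c \<le> z \<or> z \<le> c"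
  proof
    fix c assume "c \<in> set V"
    then obtain p where p: "p < length V" "c = V ! p" by (auto simp: in_set_conv_nth)
    have "c \<le> V ! (length V - 1)"
      using mc_sorted[OF assms(1), of p "length V - 1"] p ne
      by (cases "p = length V - 1") (auto simp: less_imp_le)
    then show "c \<le> z \<or> z \<le> c" using assms(3) by auto
  qed
  then have "z \<in> set V" using assms(1,2) unfolding maximal_chain_def by auto
  then obtain p where p: "p < length V" "z = V ! p" by (auto simp: in_set_conv_nth)
  have "z \<le> V ! (length V - 1)"
    using mc_sorted[OF assms(1), of p "length V - 1"] p ne
    by (cases "p = length V - 1") (auto simp: less_imp_le)
  then show False using assms(3) by auto
qed

lemma mc_first_min:
  assumes "maximal_chain X V" "z \<in> X" "z < V ! 0"
  shows False
proof -
  have ne: "V \<noteq> []" using assms(1) unfolding maximal_chain_def by auto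
  have "\<forall>c\<in>set V. c \<le> z \<or> z \<le> c"
  proof
    fix c assume "c \<in> set V"
    then obtain p where p: "p < length V" "c = V ! p" by (auto simp: in_set_conv_nth)
    have "V ! 0 \<le> c"
      using mc_sorted[OF assms(1), of 0 p] p ne
      by (cases "p = 0") (auto simp: less_imp_le)
    then show "c \<le> z \<or> z \<le> c" using assms(3) by auto
  qed
  then have "z \<in> set V" using assms(1,2) unfolding maximal_chain_def by auto
  then obtain p where p: "p < length V" "z = V ! p" by (auto simp: in_set_conv_nth)
  have "V ! 0 \<le> z"
    using mc_sorted[OF assms(1), of 0 p] p ne
    by (cases "p = 0") (auto simp: less_imp_le)
  then show False using assms(3) by auto
qed

lemma prefix_clash:
  assumes "increasing_wit X \<theta> C U" "decreasing_wit X \<theta> D V"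
    "C ! 0 = D ! 0" "C ! 1 = D ! 1" "2 < length C" "2 < length D"
  shows False
proof -
  have U: "maximal_chain X U" "length U = length C" and V: "maximal_chain X V" "length V = length D"
    using assms(1,2) unfolding increasing_wit_def decreasing_wit_def by auto
  have "\<theta> (C ! 0, C ! 1) = (U ! 0, U ! 1)" using assms(1,5) unfolding increasing_wit_def by auto
  moreover have "\<theta> (D ! 0, D ! 1) = (V ! (length D - 1 - 1), V ! (length D - 1 - 0))"
    using assms(2,6) unfolding decreasing_wit_def by auto
  ultimately have e: "U ! 1 = V ! (length V - 1)" using assms(3,4) V by auto
  have "U ! 1 < U ! 2" using mc_sorted[OF U(1), of 1 2] U assms(5) by auto
  moreover have "U ! 2 \<in> X" using mc_in[OF U(1), of 2] U assms(5) by auto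
  ultimately show False using mc_last_max[OF V(1)] e by auto
qed

lemma suffix_clash:
  assumes "increasing_wit X \<theta> C U" "decreasing_wit X \<theta> D V"
    "C ! (length C - 2) = D ! (length D - 2)" "C ! (length C - 1) = D ! (length D - 1)"
    "2 < length C" "2 < length D"
  shows False
proof -
  have U: "maximal_chain X U" "length U = length C" and V: "maximal_chain X V" "length V = length D"
    using assms(1,2) unfolding increasing_wit_def decreasing_wit_def by auto
  have "\<theta> (C ! (length C - 2), C ! (length C - 1)) = (U ! (length C - 2), U ! (length C - 1))"
  proof -
    have "\<forall>p q. p < q \<and> q < length C \<longrightarrow> \<theta> (C ! p, C ! q) = (U ! p, U ! q)"
      using assms(1) unfolding increasing_wit_def by auto
    moreover have "length C - 2 < length C - 1" "length C - 1 < length C" using assms(5) by arith+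
    ultimately show ?thesis by blast
  qed
  moreover have "\<theta> (D ! (length D - 2), D ! (length D - 1)) =
     (V ! (length D - 1 - (length D - 1)), V ! (length D - 1 - (length D - 2)))"
  proof -
    have "\<forall>p q. p < q \<and> q < length D \<longrightarrow> \<theta> (D ! p, D ! q) = (V ! (length D - 1 - q), V ! (length D - 1 - p))"
      using assms(2) unfolding decreasing_wit_def by auto
    moreover have "length D - 2 < length D - 1" "length D - 1 < length D" using assms(6) by arith+
    ultimately show ?thesis by blast
  qed
  ultimately have e: "U ! (length C - 2) = V ! 0" using assms(3,4) V by auto
  have "U ! (length C - 3) < U ! (length C - 2)" using mc_sorted[OF U(1), of "length C - 3" "length C - 2"] U assms(5) by auto
  moreover have "U ! (length C - 3) \<in> X" using mc_in[OF U(1), of "length C - 3"] U assms(5) by auto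
  ultimately show False using mc_first_min[OF V(1)] e by auto
qed

lemma glue_mc:
  assumes C: "maximal_chain X C" and D: "maximal_chain X D"
    and i: "i < length C" and j: "j < length D" and x: "C ! i = D ! j"
  shows "maximal_chain X (take (Suc i) C @ drop (Suc j) D)"
proof -
  let ?E = "take (Suc i) C @ drop (Suc j) D"
  have sC: "sorted_wrt (<) C" and sD: "sorted_wrt (<) D" and XC: "set C \<subseteq> X" and XD: "set D \<subseteq> X"
    using C D unfolding maximal_chain_def by auto
  have lowC: "\<And>c. c \<in> set (take (Suc i) C) \<Longrightarrow> c \<le> C ! i"
  proof -
    fix c assume "c \<in> set (take (Suc i) C)"
    then obtain p where "p < length (take (Suc i) C)" "c = take (Suc i) C ! p" by (auto simp: in_set_conv_nth)
    then have "p \<le> i" "c = C ! p" using i by auto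
    then show "c \<le> C ! i" using mc_sorted[OF C, of p i] i by (cases "p = i") auto
  qed
  have highD: "\<And>c. c \<in> set (drop (Suc j) D) \<Longrightarrow> D ! j < c"
  proof -
    fix c assume "c \<in> set (drop (Suc j) D)"
    then obtain p where "p < length (drop (Suc j) D)" "c = drop (Suc j) D ! p" by (auto simp: in_set_conv_nth)
    then have "Suc j + p < length D" "c = D ! (Suc j + p)" using j by auto
    then show "D ! j < c" using mc_sorted[OF D, of j "Suc j + p"] by auto
  qed
  have sorted: "sorted_wrt (<) ?E"
    unfolding sorted_wrt_append
    using sorted_wrt_take[OF sC] sorted_wrt_drop[OF sD] lowC highD x
    by (metis le_less_trans)
  have sub: "set ?E \<subseteq> X" using XC XD set_take_subset set_drop_subset by fastforce
  have maxi: "\<forall>z\<in>X. (\<forall>c\<in>set ?E. c \<le> z \<or> z \<le> c) \<longrightarrow> z \<in> set ?E"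
  proof (intro ballI impI)
    fix z assume zX: "z \<in> X" and comp: "\<forall>c\<in>set ?E. c \<le> z \<or> z \<le> c"
    have xE: "C ! i \<in> set ?E" using i by (simp add: in_set_conv_nth) (metis lessI nth_take length_take min_less_iff_conj lessI)
    then have "C ! i \<le> z \<or> z \<le> C ! i" using comp by auto
    then show "z \<in> set ?E"
    proof
      assume "z \<le> C ! i"
      have "\<forall>c\<in>set C. c \<le> z \<or> z \<le> c"
      proof
        fix c assume "c \<in> set C"
        then obtain p where p: "p < length C" "c = C ! p" by (auto simp: in_set_conv_nth)
        show "c \<le> z \<or> z \<le> c"
        proof (cases "p \<le> i")
          case True
          then have "c \<in> set ?E" using p by (auto simp: in_set_conv_nth intro!: exI[of _ p])
          then show ?thesis using comp by auto
        next
          case False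
          then have "C ! i < c" using mc_sorted[OF C, of i p] p by auto
          then show ?thesis using \<open>z \<le> C ! i\<close> by auto
        qed
      qed
      then have "z \<in> set C" using C zX unfolding maximal_chain_def by auto
      then obtain p where p: "p < length C" "z = C ! p" by (auto simp: in_set_conv_nth)
      have "p \<le> i"
      proof (rule ccontr)
        assume "\<not> p \<le> i"
        then have "C ! i < z" using mc_sorted[OF C, of i p] p by auto
        then show False using \<open>z \<le> C ! i\<close> by auto
      qed
      then show "z \<in> set ?E" using p by (auto simp: in_set_conv_nth intro!: exI[of _ p])
    next
      assume "C ! i \<le> z"
      have "\<forall>c\<in>set D. c \<le> z \<or> z \<le> c"
      proof
        fix c assume "c \<in> set D"
        then obtain p where p: "p < length D" "c = D ! p" by (auto simp: in_set_conv_nth)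
        show "c \<le> z \<or> z \<le> c"
        proof (cases "p \<le> j")
          case True
          then have "c \<le> D ! j" using mc_sorted[OF D, of p j] p j by (cases "p = j") auto
          then show ?thesis using \<open>C ! i \<le> z\<close> x by auto
        next
          case False
          then have "c \<in> set (drop (Suc j) D)" using p
            by (auto simp: in_set_conv_nth intro!: exI[of _ "p - Suc j"])
          then show ?thesis using comp by auto
        qed
      qed
      then have "z \<in> set D" using D zX unfolding maximal_chain_def by auto
      then obtain p where p: "p < length D" "z = D ! p" by (auto simp: in_set_conv_nth)
      show "z \<in> set ?E"
      proof (cases "p \<le> j")
        case True
        have "p = j"
        proof (rule ccontr)
          assume "p \<noteq> j"
          then have "z < D ! j" using mc_sorted[OF D, of p j] p j True by auto
          then show False using \<open>C ! i \<le> z\<close> x by auto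
        qed
        then show ?thesis using xE x p by auto
      next
        case False
        then have "z \<in> set (drop (Suc j) D)" using p
          by (auto simp: in_set_conv_nth intro!: exI[of _ "p - Suc j"])
        then show ?thesis by auto
      qed
    qed
  qed
  show ?thesis unfolding maximal_chain_def using sorted sub maxi i by auto
qed


lemma inc_app: "increasing_wit X \<theta> C U \<Longrightarrow> p < q \<Longrightarrow> q < length C \<Longrightarrow> \<theta> (C ! p, C ! q) = (U ! p, U ! q)"
  unfolding increasing_wit_def by blast

lemma dec_app: "decreasing_wit X \<theta> C U \<Longrightarrow> p < q \<Longrightarrow> q < length C \<Longrightarrow>
   \<theta> (C ! p, C ! q) = (U ! (length C - 1 - q), U ! (length C - 1 - p))"
  unfolding decreasing_wit_def by blast

theorem lemma3p5:
  fixes X :: "'a::order set" and \<theta> :: "'a \<times> 'a \<Rightarrow> 'a \<times> 'a"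
    and C D :: "'a list" and i j :: nat
  assumes "finite X" and "connected_poset X" and "\<theta> \<in> M_set X"
    and "maximal_chain X C" and "maximal_chain X D"
    and "0 < i" and "i < length C - 1" and "0 < j" and "j < length D - 1"
    and "C ! i = D ! j"
  shows "(increasing_on X \<theta> C \<longrightarrow> increasing_on X \<theta> D \<and>
            (\<forall>U V. increasing_wit X \<theta> C U \<and> increasing_wit X \<theta> D V \<longrightarrow> U ! i = V ! j))
       \<and> (decreasing_on X \<theta> C \<longrightarrow> decreasing_on X \<theta> D \<and>
            (\<forall>U V. decreasing_wit X \<theta> C U \<and> decreasing_wit X \<theta> D V \<longrightarrow>
               U ! (length C - 1 - i) = V ! (length D - 1 - j)))"
proof -
  define E where "E = take (Suc i) C @ drop (Suc j) D"
  define n where "n = length C"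
  define m where "m = length D"
  define k where "k = length E"
  have kdef: "k = Suc i + (m - Suc j)" using assms(7,9) unfolding k_def E_def m_def by auto
  have n3: "2 < n" and m3: "2 < m" and k3: "2 < k" using assms(6-9) kdef unfolding n_def m_def by auto
  have E0: "E ! 0 = C ! 0" and E1: "E ! 1 = C ! 1" and Ei: "E ! i = C ! i"
    using assms(6,7) unfolding E_def by (auto simp: nth_append)
  have Eq: "E ! (Suc i + q) = D ! (Suc j + q)" if "q < m - Suc j" for q
  proof -
    have "length (take (Suc i) C) = Suc i" using assms(7) by auto
    then show ?thesis using that unfolding E_def m_def by (simp add: nth_append)
  qed
  have Ek1: "E ! (k - 1) = D ! (m - 1)"
  proof -
    have "k - 1 = Suc i + (m - Suc j - 1)" "Suc j + (m - Suc j - 1) = m - 1" "m - Suc j - 1 < m - Suc j"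
      using assms(9) kdef unfolding m_def by arith+
    then show ?thesis using Eq[of "m - Suc j - 1"] by metis
  qed
  have Ek2: "E ! (k - 2) = D ! (m - 2)"
  proof (cases "m - Suc j = 1")
    case True
    then have "k - 2 = i" "m - 2 = j" using kdef by arith+
    then show ?thesis using Ei assms(10) by simp
  next
    case False
    have "k - 2 = Suc i + (m - Suc j - 2)" "Suc j + (m - Suc j - 2) = m - 2" "m - Suc j - 2 < m - Suc j"
      using assms(9) kdef False unfolding m_def by arith+
    then show ?thesis using Eq[of "m - Suc j - 2"] by metis
  qed
  have Emc: "maximal_chain X E" unfolding E_def
    using glue_mc[OF assms(4,5)] assms(7,9,10) by auto
  have th: "\<And>F. maximal_chain X F \<Longrightarrow> increasing_on X \<theta> F \<or> decreasing_on X \<theta> F"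
    using assms(3) unfolding M_set_def by auto
  have part1: "increasing_on X \<theta> C \<longrightarrow> increasing_on X \<theta> D \<and>
            (\<forall>U V. increasing_wit X \<theta> C U \<and> increasing_wit X \<theta> D V \<longrightarrow> U ! i = V ! j)"
  proof
    assume "increasing_on X \<theta> C"
    then obtain U0 where U0: "increasing_wit X \<theta> C U0" unfolding increasing_on_def by auto
    have "\<not> decreasing_on X \<theta> E"
    proof
      assume "decreasing_on X \<theta> E"
      then obtain W where "decreasing_wit X \<theta> E W" unfolding decreasing_on_def by auto
      then show False using prefix_clash[OF U0] E0 E1 n3 k3 unfolding n_def k_def by metis
    qed
    then obtain W where W: "increasing_wit X \<theta> E W" using th[OF Emc] unfolding increasing_on_def by auto
    have "\<not> decreasing_on X \<theta> D"
    proof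
      assume "decreasing_on X \<theta> D"
      then obtain V where "decreasing_wit X \<theta> D V" unfolding decreasing_on_def by auto
      then show False using suffix_clash[OF W] Ek1 Ek2 m3 k3 unfolding m_def k_def by metis
    qed
    then have "increasing_on X \<theta> D" using th[OF assms(5)] by auto
    moreover have "U ! i = V ! j" if "increasing_wit X \<theta> C U" "increasing_wit X \<theta> D V" for U V
    proof -
      have "\<theta> (C ! 0, C ! i) = (U ! 0, U ! i)" using inc_app[OF that(1), of 0 i] assms(6,7) by auto
      moreover have "\<theta> (E ! 0, E ! i) = (W ! 0, W ! i)" using inc_app[OF W, of 0 i] assms(6) kdef
        unfolding k_def by auto
      ultimately have 1: "U ! i = W ! i" using E0 Ei by auto
      have "\<theta> (E ! i, E ! (k - 1)) = (W ! i, W ! (k - 1))" using inc_app[OF W, of i "k - 1"] kdef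
        assms(9) unfolding k_def m_def by auto
      moreover have "\<theta> (D ! j, D ! (m - 1)) = (V ! j, V ! (m - 1))" using inc_app[OF that(2), of j "m - 1"]
        assms(9) unfolding m_def by auto
      ultimately show ?thesis using 1 Ei Ek1 assms(10) by auto
    qed
    ultimately show "increasing_on X \<theta> D \<and>
            (\<forall>U V. increasing_wit X \<theta> C U \<and> increasing_wit X \<theta> D V \<longrightarrow> U ! i = V ! j)" by auto
  qed
  have part2: "decreasing_on X \<theta> C \<longrightarrow> decreasing_on X \<theta> D \<and>
            (\<forall>U V. decreasing_wit X \<theta> C U \<and> decreasing_wit X \<theta> D V \<longrightarrow>
               U ! (length C - 1 - i) = V ! (length D - 1 - j))"
  proof
    assume "decreasing_on X \<theta> C"
    then obtain U0 where U0: "decreasing_wit X \<theta> C U0" unfolding decreasing_on_def by auto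
    have "\<not> increasing_on X \<theta> E"
    proof
      assume "increasing_on X \<theta> E"
      then obtain W where "increasing_wit X \<theta> E W" unfolding increasing_on_def by auto
      then show False using prefix_clash[OF _ U0] E0 E1 n3 k3 unfolding n_def k_def by metis
    qed
    then obtain W where W: "decreasing_wit X \<theta> E W" using th[OF Emc] unfolding decreasing_on_def by auto
    have "\<not> increasing_on X \<theta> D"
    proof
      assume "increasing_on X \<theta> D"
      then obtain V where "increasing_wit X \<theta> D V" unfolding increasing_on_def by auto
      then show False using suffix_clash[OF _ W] Ek1 Ek2 m3 k3 unfolding m_def k_def by metis
    qed
    then have "decreasing_on X \<theta> D" using th[OF assms(5)] by auto
    moreover have "U ! (n - 1 - i) = V ! (m - 1 - j)" if "decreasing_wit X \<theta> C U" "decreasing_wit X \<theta> D V" for U V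
    proof -
      have "\<theta> (C ! 0, C ! i) = (U ! (n - 1 - i), U ! (n - 1 - 0))" using dec_app[OF that(1), of 0 i] assms(6,7)
        unfolding n_def by auto
      moreover have "\<theta> (E ! 0, E ! i) = (W ! (k - 1 - i), W ! (k - 1 - 0))" using dec_app[OF W, of 0 i] assms(6) kdef
        unfolding k_def by auto
      ultimately have 1: "U ! (n - 1 - i) = W ! (k - 1 - i)" using E0 Ei by auto
      have "\<theta> (E ! i, E ! (k - 1)) = (W ! (k - 1 - (k - 1)), W ! (k - 1 - i))" using dec_app[OF W, of i "k - 1"] kdef
        assms(9) unfolding k_def m_def by auto
      moreover have "\<theta> (D ! j, D ! (m - 1)) = (V ! (m - 1 - (m - 1)), V ! (m - 1 - j))" using dec_app[OF that(2), of j "m - 1"]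
        assms(9) unfolding m_def by auto
      ultimately show ?thesis using 1 Ei Ek1 assms(10) by auto
    qed
    ultimately show "decreasing_on X \<theta> D \<and>
            (\<forall>U V. decreasing_wit X \<theta> C U \<and> decreasing_wit X \<theta> D V \<longrightarrow>
               U ! (length C - 1 - i) = V ! (length D - 1 - j))" unfolding n_def m_def by auto
  qed
  show ?thesis using part1 part2 by blast
qed

end
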